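(* Let $k\ge 2$ and $\Delta\ge 2$ be integers. For $n\ge 0$ let $p_n=\mu_n(\sigma_\rho=1\mid \sigma_{L_n}=1)$, where $\sigma_{L_n}=1$ means that every vertex of $L_n$ is in the independent set. Then the independent set model has uniqueness on $\mathbb{T}_{k,\Delta}$ if and only if $\limsup_{n\to\infty}|p_{n+1}-p_n|=0$.
   Context: $\mathbb{T}_{k,\Delta}$ is the infinite $(\Delta-1)$-ary $k$-uniform hypertree with root $\rho$: recursively, each vertex has $\Delta-1$ descending hyperedges, each consisting of that vertex together with $k-1$ new vertices (its children). For $n\ge 0$, $\mathbb{T}(n)$ is the finite sub-hypergraph induced by the vertices at distance at most $n$ from $\rho$ (i.e. the first $n$ generations below $\rho$), with vertex set $V_n$, and $L_n$ is the set of vertices at distance exactly $n$ from $\rho$ (its leaves). Independent sets of a hypergraph are vertex subsets containing no hyperedge; an independent set $I$ is identified with $\sigma:V_n\to\{0,1\}$, $\sigma(v)=1$ iff $v\in I$. $\mu_n$ is the uniform distribution on independent sets of $\mathbb{T}(n)$. The independent set model has uniqueness on $\mathbb{T}_{k,\Delta}$ iff $\limsup_{n\to\infty}\max_{\eta,\eta':L_n\to\{0,1\}}|\mu_n(\sigma_\rho=1\mid\sigma_{L_n}=\eta)-\mu_n(\sigma_\rho=1\mid\sigma_{L_n}=\eta')|=0$, where $\sigma_\rho$ is the spin of the root and $\sigma_{L_n}$ the restriction of $\sigma$ to $L_n$. *)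

theory Defs
  imports Complex_Main "HOL-Library.Extended_Real" "HOL-Library.Liminf_Limsup"
begin

text \<open>Vertices of the infinite (Delta-1)-ary k-uniform hypertree are encoded as finite
  lists of pairs (a, b): starting at the root [], the pair (a, b) means
  "go down the descending hyperedge number a (a < Delta - 1) to its child number b
  (b < k - 1)".\<close>

definition hvert :: "nat \<Rightarrow> nat \<Rightarrow> nat \<Rightarrow> (nat \<times> nat) list set" where
  "hvert k \<Delta> n = {xs. length xs \<le> n \<and> (\<forall>(a, b)\<in>set xs. a < \<Delta> - 1 \<and> b < k - 1)}"

definition hleaves :: "nat \<Rightarrow> nat \<Rightarrow> nat \<Rightarrow> (nat \<times> nat) list set" where
  "hleaves k \<Delta> n = {xs \<in> hvert k \<Delta> n. length xs = n}"

definition hedges :: "nat \<Rightarrow> nat \<Rightarrow> nat \<Rightarrow> (nat \<times> nat) list set set" where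
  "hedges k \<Delta> n = {insert v {v @ [(a, b)] | b. b < k - 1} | v a.
      v \<in> hvert k \<Delta> n \<and> length v < n \<and> a < \<Delta> - 1}"

definition hindep :: "nat \<Rightarrow> nat \<Rightarrow> nat \<Rightarrow> (nat \<times> nat) list set \<Rightarrow> bool" where
  "hindep k \<Delta> n I \<longleftrightarrow> I \<subseteq> hvert k \<Delta> n \<and> (\<forall>e\<in>hedges k \<Delta> n. \<not> e \<subseteq> I)"

text \<open>mu_n(sigma_rho = 1 | sigma_{L_n} = eta) under the uniform distribution on
  independent sets of T(n); the boundary condition eta : L_n -> {0,1} is identified
  with the set eta of leaves receiving spin 1.\<close>
definition hcond :: "nat \<Rightarrow> nat \<Rightarrow> nat \<Rightarrow> (nat \<times> nat) list set \<Rightarrow> real" where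
  "hcond k \<Delta> n \<eta> =
     real (card {I. hindep k \<Delta> n I \<and> [] \<in> I \<and> I \<inter> hleaves k \<Delta> n = \<eta>})
     / real (card {I. hindep k \<Delta> n I \<and> I \<inter> hleaves k \<Delta> n = \<eta>})"

definition huniqueness :: "nat \<Rightarrow> nat \<Rightarrow> bool" where
  "huniqueness k \<Delta> \<longleftrightarrow>
     limsup (\<lambda>n. ereal (Max {\<bar>hcond k \<Delta> n \<eta> - hcond k \<Delta> n \<eta>'\<bar> | \<eta> \<eta>'.
        \<eta> \<subseteq> hleaves k \<Delta> n \<and> \<eta>' \<subseteq> hleaves k \<Delta> n})) = 0"

definition hp :: "nat \<Rightarrow> nat \<Rightarrow> nat \<Rightarrow> real" where
  "hp k \<Delta> n = hcond k \<Delta> n (hleaves k \<Delta> n)"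

end

theory Submission imports Defs "HOL-Library.FuncSet" begin

definition ch :: "nat \<times> nat \<Rightarrow> (nat \<times> nat) list set \<Rightarrow> (nat \<times> nat) list set" where
  "ch c J = {ws. c # ws \<in> J}"

lemma hvert_Suc: "xs \<in> hvert k \<Delta> (Suc m) \<longleftrightarrow> xs = [] \<or> (\<exists>a b ws. xs = (a,b)#ws \<and> a < \<Delta>-1 \<and> b < k-1 \<and> ws \<in> hvert k \<Delta> m)"
  by (cases xs) (auto simp: hvert_def)

lemma hleaves_Suc: "xs \<in> hleaves k \<Delta> (Suc m) \<longleftrightarrow> (\<exists>a b ws. xs = (a,b)#ws \<and> a < \<Delta>-1 \<and> b < k-1 \<and> ws \<in> hleaves k \<Delta> m)"
  by (cases xs) (auto simp: hvert_def hleaves_def)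

lemma hleaves_sub: "hleaves k \<Delta> m \<subseteq> hvert k \<Delta> m" by (auto simp: hleaves_def)

lemma finite_hvert: "finite (hvert k \<Delta> m)"
proof -
  have "hvert k \<Delta> m = {xs. set xs \<subseteq> {..<\<Delta>-1} \<times> {..<k-1} \<and> length xs \<le> m}"
    by (auto simp: hvert_def)
  then show ?thesis by (simp add: finite_lists_length_le)
qed

lemma hedgesI: "v \<in> hvert k \<Delta> n \<Longrightarrow> length v < n \<Longrightarrow> a < \<Delta>-1 \<Longrightarrow>
  insert v {v @ [(a,b)] | b. b<k-1} \<in> hedges k \<Delta> n"
  unfolding hedges_def by blast

lemma hindep_Suc:
  "hindep k \<Delta> (Suc m) I \<longleftrightarrow> I \<subseteq> hvert k \<Delta> (Suc m) \<and> ([] \<in> I \<longrightarrow> (\<forall>a<\<Delta>-1. \<exists>b<k-1. [(a,b)] \<notin> I))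
     \<and> (\<forall>a<\<Delta>-1. \<forall>b<k-1. hindep k \<Delta> m (ch (a,b) I))"
proof
  assume H: "hindep k \<Delta> (Suc m) I"
  then have sub: "I \<subseteq> hvert k \<Delta> (Suc m)" by (simp add: hindep_def)
  have E: "\<not> e \<subseteq> I" if "e \<in> hedges k \<Delta> (Suc m)" for e using H that by (auto simp: hindep_def)
  show "I \<subseteq> hvert k \<Delta> (Suc m) \<and> ([] \<in> I \<longrightarrow> (\<forall>a<\<Delta>-1. \<exists>b<k-1. [(a,b)] \<notin> I))
     \<and> (\<forall>a<\<Delta>-1. \<forall>b<k-1. hindep k \<Delta> m (ch (a,b) I))"
  proof (intro conjI impI allI)
    show "I \<subseteq> hvert k \<Delta> (Suc m)" by fact
  next
    fix a assume "[] \<in> I" "a < \<Delta>-1"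
    have "insert [] {[] @ [(a, b)] |b. b < k - 1} \<in> hedges k \<Delta> (Suc m)"
      using hedgesI[of "[]" k \<Delta> "Suc m" a] \<open>a < \<Delta>-1\<close> by (auto simp: hvert_def)
    from E[OF this] \<open>[] \<in> I\<close> show "\<exists>b<k-1. [(a,b)] \<notin> I" by auto
  next
    fix a b assume ab: "a < \<Delta>-1" "b < k-1"
    show "hindep k \<Delta> m (ch (a,b) I)"
      unfolding hindep_def
    proof (intro conjI ballI)
      show "ch (a,b) I \<subseteq> hvert k \<Delta> m" using sub by (auto simp: ch_def hvert_Suc)
    next
      fix e assume "e \<in> hedges k \<Delta> m"
      then obtain v a' where e: "e = insert v {v @ [(a', b')] |b'. b' < k - 1}"
        and v: "v \<in> hvert k \<Delta> m" "length v < m" "a' < \<Delta>-1"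
        by (auto simp: hedges_def)
      have "insert ((a,b)#v) {((a,b)#v) @ [(a', b')] |b'. b' < k - 1} \<in> hedges k \<Delta> (Suc m)"
        using hedgesI[of "(a,b)#v" k \<Delta> "Suc m" a'] v ab by (auto simp: hvert_def)
      from E[OF this] show "\<not> e \<subseteq> ch (a,b) I" unfolding e ch_def by auto
    qed
  qed
next
  assume H: "I \<subseteq> hvert k \<Delta> (Suc m) \<and> ([] \<in> I \<longrightarrow> (\<forall>a<\<Delta>-1. \<exists>b<k-1. [(a,b)] \<notin> I))
     \<and> (\<forall>a<\<Delta>-1. \<forall>b<k-1. hindep k \<Delta> m (ch (a,b) I))"
  show "hindep k \<Delta> (Suc m) I"
    unfolding hindep_def
  proof (intro conjI ballI)
    show "I \<subseteq> hvert k \<Delta> (Suc m)" using H by simp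
  next
    fix e assume "e \<in> hedges k \<Delta> (Suc m)"
    then obtain v a' where e: "e = insert v {v @ [(a', b')] |b'. b' < k - 1}"
      and v: "v \<in> hvert k \<Delta> (Suc m)" "length v < Suc m" "a' < \<Delta>-1"
      by (auto simp: hedges_def)
    show "\<not> e \<subseteq> I"
    proof (cases v)
      case Nil
      then show ?thesis using H v e by fastforce
    next
      case (Cons c w)
      obtain a b where c: "c = (a,b)" by force
      with Cons v have ab: "a < \<Delta>-1" "b < k-1" and w: "w \<in> hvert k \<Delta> m" "length w < m"
        by (auto simp: hvert_def)
      have "insert w {w @ [(a', b')] |b'. b' < k - 1} \<in> hedges k \<Delta> m"
        unfolding hedges_def using w v by auto
      moreover from H ab have "hindep k \<Delta> m (ch (a,b) I)" by blast
      ultimately have "\<not> insert w {w @ [(a', b')] |b'. b' < k - 1} \<subseteq> ch (a,b) I"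
        unfolding hindep_def by blast
      then show ?thesis unfolding e Cons c ch_def by auto
    qed
  qed
qed

lemma leaves_Suc_iff:
  assumes I: "I \<subseteq> hvert k \<Delta> (Suc m)" and eta: "\<eta> \<subseteq> hleaves k \<Delta> (Suc m)"
  shows "I \<inter> hleaves k \<Delta> (Suc m) = \<eta> \<longleftrightarrow>
    (\<forall>a<\<Delta>-1. \<forall>b<k-1. ch (a,b) I \<inter> hleaves k \<Delta> m = ch (a,b) \<eta>)"
proof
  assume H: "I \<inter> hleaves k \<Delta> (Suc m) = \<eta>"
  show "\<forall>a<\<Delta>-1. \<forall>b<k-1. ch (a,b) I \<inter> hleaves k \<Delta> m = ch (a,b) \<eta>"
    unfolding H[symmetric] ch_def by (auto simp: hleaves_Suc)
next
  assume H: "\<forall>a<\<Delta>-1. \<forall>b<k-1. ch (a,b) I \<inter> hleaves k \<Delta> m = ch (a,b) \<eta>"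
  show "I \<inter> hleaves k \<Delta> (Suc m) = \<eta>"
  proof (intro equalityI subsetI)
    fix x assume "x \<in> I \<inter> hleaves k \<Delta> (Suc m)"
    then obtain a b ws where x: "x = (a,b)#ws" "a < \<Delta>-1" "b<k-1" "ws \<in> hleaves k \<Delta> m" "x \<in> I"
      by (auto simp: hleaves_Suc)
    then have "ws \<in> ch (a,b) I \<inter> hleaves k \<Delta> m" by (auto simp: ch_def)
    with H x show "x \<in> \<eta>" by (auto simp: ch_def)
  next
    fix x assume "x \<in> \<eta>"
    with eta have "x \<in> hleaves k \<Delta> (Suc m)" by blast
    then obtain a b ws where x: "x = (a,b)#ws" "a < \<Delta>-1" "b<k-1" "ws \<in> hleaves k \<Delta> m"
      unfolding hleaves_Suc by blast
    then have "ws \<in> ch (a,b) \<eta>" using \<open>x \<in> \<eta>\<close> by (auto simp: ch_def)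
    with H x have "ws \<in> ch (a,b) I" by blast
    then show "x \<in> I \<inter> hleaves k \<Delta> (Suc m)" using x by (auto simp: ch_def hleaves_Suc)
  qed
qed

definition Sset where "Sset k \<Delta> m \<eta> = {J. hindep k \<Delta> m J \<and> J \<inter> hleaves k \<Delta> m = \<eta>}"
definition Tset where "Tset k \<Delta> m \<eta> = {J. hindep k \<Delta> m J \<and> [] \<in> J \<and> J \<inter> hleaves k \<Delta> m = \<eta>}"

definition phi where "phi k \<Delta> I = (\<lambda>a\<in>{..<\<Delta>-1}. \<lambda>b\<in>{..<k-1}. ch (a,b) I)"
definition psi where "psi k \<Delta> r g = {x. (x = [] \<and> r) \<or>
   (\<exists>a b ws. x = (a,b)#ws \<and> a < \<Delta>-1 \<and> b < k-1 \<and> ws \<in> g a b)}"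

definition Tgt where "Tgt k \<Delta> m \<eta> r = PiE {..<\<Delta>-1} (\<lambda>a. if r then
   PiE {..<k-1} (\<lambda>b. Sset k \<Delta> m (ch (a,b) \<eta>)) - PiE {..<k-1} (\<lambda>b. Tset k \<Delta> m (ch (a,b) \<eta>))
   else PiE {..<k-1} (\<lambda>b. Sset k \<Delta> m (ch (a,b) \<eta>)))"

lemma ch_psi: "a < \<Delta>-1 \<Longrightarrow> b < k-1 \<Longrightarrow> ch (a,b) (psi k \<Delta> r g) = g a b"
  by (auto simp: ch_def psi_def)

lemma bij:
  assumes eta: "\<eta> \<subseteq> hleaves k \<Delta> (Suc m)"
  shows "bij_betw (phi k \<Delta>) {I. hindep k \<Delta> (Suc m) I \<and> ([] \<in> I) = r \<and> I \<inter> hleaves k \<Delta> (Suc m) = \<eta>}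
     (Tgt k \<Delta> m \<eta> r)"
proof (rule bij_betw_byWitness[where f'="psi k \<Delta> r"])
  show "\<forall>I\<in>{I. hindep k \<Delta> (Suc m) I \<and> ([] \<in> I) = r \<and> I \<inter> hleaves k \<Delta> (Suc m) = \<eta>}.
     psi k \<Delta> r (phi k \<Delta> I) = I"
  proof
    fix I assume "I \<in> {I. hindep k \<Delta> (Suc m) I \<and> ([] \<in> I) = r \<and> I \<inter> hleaves k \<Delta> (Suc m) = \<eta>}"
    then have I: "I \<subseteq> hvert k \<Delta> (Suc m)" "([] \<in> I) = r" by (auto simp: hindep_def)
    show "psi k \<Delta> r (phi k \<Delta> I) = I"
    proof (intro equalityI subsetI)
      fix x assume "x \<in> psi k \<Delta> r (phi k \<Delta> I)"
      then show "x \<in> I" using I by (auto simp: psi_def phi_def ch_def)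
    next
      fix x assume "x \<in> I"
      with I(1) have "x = [] \<or> (\<exists>a b ws. x = (a,b)#ws \<and> a < \<Delta>-1 \<and> b < k-1 \<and> ws \<in> hvert k \<Delta> m)"
        using hvert_Suc by blast
      then show "x \<in> psi k \<Delta> r (phi k \<Delta> I)" using I \<open>x \<in> I\<close> by (auto simp: psi_def phi_def ch_def)
    qed
  qed
next
  show "\<forall>g\<in>Tgt k \<Delta> m \<eta> r. phi k \<Delta> (psi k \<Delta> r g) = g"
  proof
    fix g assume g: "g \<in> Tgt k \<Delta> m \<eta> r"
    show "phi k \<Delta> (psi k \<Delta> r g) = g"
    proof (rule ext)
      fix a show "phi k \<Delta> (psi k \<Delta> r g) a = g a"
      proof (cases "a < \<Delta>-1")
        case True
        have "g a \<in> (if r then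
   PiE {..<k-1} (\<lambda>b. Sset k \<Delta> m (ch (a,b) \<eta>)) - PiE {..<k-1} (\<lambda>b. Tset k \<Delta> m (ch (a,b) \<eta>))
   else PiE {..<k-1} (\<lambda>b. Sset k \<Delta> m (ch (a,b) \<eta>)))"
          using PiE_mem[OF g[unfolded Tgt_def]] True by blast
        then have ga: "g a \<in> PiE {..<k-1} (\<lambda>b. Sset k \<Delta> m (ch (a,b) \<eta>))"
          by (cases r) simp_all
        show ?thesis
        proof (rule ext)
          fix b show "phi k \<Delta> (psi k \<Delta> r g) a b = g a b"
          proof (cases "b < k-1")
            case bK: True
            have "phi k \<Delta> (psi k \<Delta> r g) a b = ch (a,b) (psi k \<Delta> r g)"
              using True bK by (simp add: phi_def)
            then show ?thesis using ch_psi[OF True bK] by simp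
          next
            case False
            then have "phi k \<Delta> (psi k \<Delta> r g) a b = undefined" using True by (simp add: phi_def)
            moreover have "g a b = undefined" using PiE_arb[OF ga] False by simp
            ultimately show ?thesis by simp
          qed
        qed
      next
        case False
        then have "phi k \<Delta> (psi k \<Delta> r g) a = undefined" by (simp add: phi_def)
        moreover have "g a = undefined" using PiE_arb[OF g[unfolded Tgt_def]] False by simp
        ultimately show ?thesis by simp
      qed
    qed
  qed
next
  show "phi k \<Delta> ` {I. hindep k \<Delta> (Suc m) I \<and> ([] \<in> I) = r \<and> I \<inter> hleaves k \<Delta> (Suc m) = \<eta>}
     \<subseteq> Tgt k \<Delta> m \<eta> r"
  proof (rule image_subsetI)
    fix I assume HH: "I \<in> {I. hindep k \<Delta> (Suc m) I \<and> ([] \<in> I) = r \<and> I \<inter> hleaves k \<Delta> (Suc m) = \<eta>}"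
    then have H: "hindep k \<Delta> (Suc m) I" "I \<inter> hleaves k \<Delta> (Suc m) = \<eta>" "r = ([] \<in> I)" by auto
    then have I: "I \<subseteq> hvert k \<Delta> (Suc m)" by (simp add: hindep_def)
    have L: "\<forall>a<\<Delta>-1. \<forall>b<k-1. ch (a,b) I \<inter> hleaves k \<Delta> m = ch (a,b) \<eta>"
      using leaves_Suc_iff[OF I eta] H(2) by blast
    have D: "\<forall>a<\<Delta>-1. \<forall>b<k-1. hindep k \<Delta> m (ch (a,b) I)" and R: "[] \<in> I \<longrightarrow> (\<forall>a<\<Delta>-1. \<exists>b<k-1. [(a,b)] \<notin> I)"
      using H(1) hindep_Suc by blast+
    have inS: "phi k \<Delta> I a \<in> PiE {..<k-1} (\<lambda>b. Sset k \<Delta> m (ch (a,b) \<eta>))" if a: "a < \<Delta>-1" for a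
      using a L D by (auto simp: phi_def Sset_def)
    have notT: "phi k \<Delta> I a \<notin> PiE {..<k-1} (\<lambda>b. Tset k \<Delta> m (ch (a,b) \<eta>))"
      if a: "a < \<Delta>-1" and "[] \<in> I" for a
    proof -
      from R a that obtain b where b: "b < k-1" "[(a,b)] \<notin> I" by auto
      then have "phi k \<Delta> I a b \<notin> Tset k \<Delta> m (ch (a,b) \<eta>)"
        using a by (simp add: phi_def Tset_def ch_def)
      with b show ?thesis by (auto simp: PiE_def Pi_def)
    qed
    show "phi k \<Delta> I \<in> Tgt k \<Delta> m \<eta> r"
      unfolding Tgt_def
    proof (rule PiE_I)
      fix a assume a: "a \<in> {..<\<Delta>-1}"
      then show "phi k \<Delta> I a \<in> (if r then
         PiE {..<k-1} (\<lambda>b. Sset k \<Delta> m (ch (a,b) \<eta>)) - PiE {..<k-1} (\<lambda>b. Tset k \<Delta> m (ch (a,b) \<eta>))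
         else PiE {..<k-1} (\<lambda>b. Sset k \<Delta> m (ch (a,b) \<eta>)))"
        using inS notT H(3) by auto
    next
      fix a assume "a \<notin> {..<\<Delta>-1}" then show "phi k \<Delta> I a = undefined" by (simp add: phi_def)
    qed
  qed
next
  show "psi k \<Delta> r ` Tgt k \<Delta> m \<eta> r \<subseteq>
     {I. hindep k \<Delta> (Suc m) I \<and> ([] \<in> I) = r \<and> I \<inter> hleaves k \<Delta> (Suc m) = \<eta>}"
  proof (rule image_subsetI)
    fix g assume g: "g \<in> Tgt k \<Delta> m \<eta> r"
    have gS: "g a b \<in> Sset k \<Delta> m (ch (a,b) \<eta>)" if "a < \<Delta>-1" "b < k-1" for a b
    proof -
      have "g a \<in> (if r then
         PiE {..<k-1} (\<lambda>b. Sset k \<Delta> m (ch (a,b) \<eta>)) - PiE {..<k-1} (\<lambda>b. Tset k \<Delta> m (ch (a,b) \<eta>))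
         else PiE {..<k-1} (\<lambda>b. Sset k \<Delta> m (ch (a,b) \<eta>)))"
        using PiE_mem[OF g[unfolded Tgt_def]] that by blast
      then have "g a \<in> PiE {..<k-1} (\<lambda>b. Sset k \<Delta> m (ch (a,b) \<eta>))"
        by (cases r) simp_all
      then show ?thesis using PiE_mem that by blast
    qed
    have gE: "g a \<in> extensional {..<k-1}" if "a < \<Delta>-1" for a
    proof -
      have "g a \<in> (if r then
         PiE {..<k-1} (\<lambda>b. Sset k \<Delta> m (ch (a,b) \<eta>)) - PiE {..<k-1} (\<lambda>b. Tset k \<Delta> m (ch (a,b) \<eta>))
         else PiE {..<k-1} (\<lambda>b. Sset k \<Delta> m (ch (a,b) \<eta>)))"
        using PiE_mem[OF g[unfolded Tgt_def]] that by blast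
      then have "g a \<in> PiE {..<k-1} (\<lambda>b. Sset k \<Delta> m (ch (a,b) \<eta>))"
        by (cases r) simp_all
      then show ?thesis by (simp add: PiE_def)
    qed
    have sub: "psi k \<Delta> r g \<subseteq> hvert k \<Delta> (Suc m)"
    proof
      fix x assume "x \<in> psi k \<Delta> r g"
      then have "x = [] \<or> (\<exists>a b ws. x = (a,b)#ws \<and> a < \<Delta>-1 \<and> b < k-1 \<and> ws \<in> g a b)"
        by (auto simp: psi_def)
      then show "x \<in> hvert k \<Delta> (Suc m)"
      proof
        assume "\<exists>a b ws. x = (a,b)#ws \<and> a < \<Delta>-1 \<and> b < k-1 \<and> ws \<in> g a b"
        then obtain a b ws where "x = (a,b)#ws" "a < \<Delta>-1" "b < k-1" "ws \<in> g a b" by blast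
        moreover from gS[OF this(2,3)] have "g a b \<subseteq> hvert k \<Delta> m" by (simp add: Sset_def hindep_def)
        ultimately show ?thesis using hvert_Suc by blast
      qed (simp add: hvert_def)
    qed
    have root: "([] \<in> psi k \<Delta> r g) = r" by (simp add: psi_def)
    have R: "[] \<in> psi k \<Delta> r g \<longrightarrow> (\<forall>a<\<Delta>-1. \<exists>b<k-1. [(a,b)] \<notin> psi k \<Delta> r g)"
    proof (intro impI allI)
      fix a assume r: "[] \<in> psi k \<Delta> r g" and a: "a < \<Delta>-1"
      with root have "r" by simp
      have "g a \<in> (if r then
         PiE {..<k-1} (\<lambda>b. Sset k \<Delta> m (ch (a,b) \<eta>)) - PiE {..<k-1} (\<lambda>b. Tset k \<Delta> m (ch (a,b) \<eta>))
         else PiE {..<k-1} (\<lambda>b. Sset k \<Delta> m (ch (a,b) \<eta>)))"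
        using PiE_mem[OF g[unfolded Tgt_def]] a by blast
      with \<open>r\<close> have "g a \<notin> PiE {..<k-1} (\<lambda>b. Tset k \<Delta> m (ch (a,b) \<eta>))"
        by simp
      moreover have "g a \<in> extensional {..<k-1}" using gE a by blast
      ultimately obtain b where b: "b < k-1" "g a b \<notin> Tset k \<Delta> m (ch (a,b) \<eta>)"
        by (auto simp: PiE_def Pi_def)
      with gS[OF a b(1)] have "[] \<notin> g a b" by (auto simp: Sset_def Tset_def)
      then have "[(a,b)] \<notin> psi k \<Delta> r g" using ch_psi[OF a b(1), of r g] by (auto simp: ch_def)
      with b show "\<exists>b<k-1. [(a,b)] \<notin> psi k \<Delta> r g" by blast
    qed
    have "hindep k \<Delta> (Suc m) (psi k \<Delta> r g)"
      unfolding hindep_Suc using sub R gS ch_psi by (auto simp: Sset_def)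
    moreover have "psi k \<Delta> r g \<inter> hleaves k \<Delta> (Suc m) = \<eta>"
      unfolding leaves_Suc_iff[OF sub eta] using gS ch_psi by (auto simp: Sset_def)
    ultimately show "psi k \<Delta> r g \<in> {I. hindep k \<Delta> (Suc m) I \<and> ([] \<in> I) = r \<and> I \<inter> hleaves k \<Delta> (Suc m) = \<eta>}"
      using root by blast
  qed
qed


lemma finite_Sset: "finite (Sset k \<Delta> m \<eta>)"
proof -
  have "Sset k \<Delta> m \<eta> \<subseteq> Pow (hvert k \<Delta> m)" by (auto simp: Sset_def hindep_def)
  then show ?thesis using finite_hvert finite_subset by blast
qed

lemma finite_Tset: "finite (Tset k \<Delta> m \<eta>)"
proof -
  have "Tset k \<Delta> m \<eta> \<subseteq> Sset k \<Delta> m \<eta>" by (auto simp: Sset_def Tset_def)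
  then show ?thesis using finite_Sset finite_subset by blast
qed

lemma Tset_sub: "Tset k \<Delta> m \<eta> \<subseteq> Sset k \<Delta> m \<eta>" by (auto simp: Sset_def Tset_def)

lemma card_T_le: "card (Tset k \<Delta> m \<eta>) \<le> card (Sset k \<Delta> m \<eta>)"
  by (rule card_mono[OF finite_Sset Tset_sub])

lemma Sset_pos:
  assumes "\<eta> \<subseteq> hleaves k \<Delta> m" shows "card (Sset k \<Delta> m \<eta>) > 0"
proof -
  have "hindep k \<Delta> m \<eta>"
    unfolding hindep_def
  proof (intro conjI ballI)
    show "\<eta> \<subseteq> hvert k \<Delta> m" using assms hleaves_sub by blast
  next
    fix e assume "e \<in> hedges k \<Delta> m"
    then obtain v a where "e = insert v {v @ [(a, b)] |b. b < k - 1}" "length v < m"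
      by (auto simp: hedges_def)
    moreover have "v \<notin> \<eta>" if "length v < m" for v using that assms by (auto simp: hleaves_def)
    ultimately show "\<not> e \<subseteq> \<eta>" by auto
  qed
  moreover have "\<eta> \<inter> hleaves k \<Delta> m = \<eta>" using assms by blast
  ultimately have "\<eta> \<in> Sset k \<Delta> m \<eta>" by (simp add: Sset_def)
  then show ?thesis using finite_Sset card_gt_0_iff by blast
qed

lemma hcond_eq: "hcond k \<Delta> m \<eta> = real (card (Tset k \<Delta> m \<eta>)) / real (card (Sset k \<Delta> m \<eta>))"
  by (simp add: hcond_def Tset_def Sset_def)

lemma hcond_01: "0 \<le> hcond k \<Delta> m \<eta>" "hcond k \<Delta> m \<eta> \<le> 1"
  unfolding hcond_eq using card_T_le[of k \<Delta> m \<eta>]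
  by (auto simp: divide_le_eq_1)

lemma ch_leaves:
  assumes "\<eta> \<subseteq> hleaves k \<Delta> (Suc m)"
  shows "ch (a,b) \<eta> \<subseteq> hleaves k \<Delta> m"
  using assms by (auto simp: ch_def hleaves_Suc)

lemma card_Tgt_True:
  "card (Tgt k \<Delta> m \<eta> True) = (\<Prod>a<\<Delta>-1. (\<Prod>b<k-1. card (Sset k \<Delta> m (ch (a,b) \<eta>)))
      - (\<Prod>b<k-1. card (Tset k \<Delta> m (ch (a,b) \<eta>))))"
proof -
  have "card (Tgt k \<Delta> m \<eta> True) = (\<Prod>a<\<Delta>-1. card (PiE {..<k-1} (\<lambda>b. Sset k \<Delta> m (ch (a,b) \<eta>))
     - PiE {..<k-1} (\<lambda>b. Tset k \<Delta> m (ch (a,b) \<eta>))))"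
    unfolding Tgt_def by (simp add: card_PiE)
  also have "\<dots> = (\<Prod>a<\<Delta>-1. (\<Prod>b<k-1. card (Sset k \<Delta> m (ch (a,b) \<eta>)))
      - (\<Prod>b<k-1. card (Tset k \<Delta> m (ch (a,b) \<eta>))))"
  proof (rule prod.cong[OF refl])
    fix a
    have "card (PiE {..<k-1} (\<lambda>b. Sset k \<Delta> m (ch (a,b) \<eta>)) - PiE {..<k-1} (\<lambda>b. Tset k \<Delta> m (ch (a,b) \<eta>)))
      = card (PiE {..<k-1} (\<lambda>b. Sset k \<Delta> m (ch (a,b) \<eta>))) - card (PiE {..<k-1} (\<lambda>b. Tset k \<Delta> m (ch (a,b) \<eta>)))"
      by (rule card_Diff_subset) (auto intro!: finite_PiE finite_Tset PiE_mono Tset_sub[THEN subsetD])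
    then show "card (PiE {..<k-1} (\<lambda>b. Sset k \<Delta> m (ch (a,b) \<eta>)) - PiE {..<k-1} (\<lambda>b. Tset k \<Delta> m (ch (a,b) \<eta>)))
      = (\<Prod>b<k-1. card (Sset k \<Delta> m (ch (a,b) \<eta>))) - (\<Prod>b<k-1. card (Tset k \<Delta> m (ch (a,b) \<eta>)))"
      by (simp add: card_PiE)
  qed
  finally show ?thesis .
qed

lemma card_Tgt_False:
  "card (Tgt k \<Delta> m \<eta> False) = (\<Prod>a<\<Delta>-1. \<Prod>b<k-1. card (Sset k \<Delta> m (ch (a,b) \<eta>)))"
  unfolding Tgt_def by (simp add: card_PiE)

lemma card_T_Suc:
  assumes "\<eta> \<subseteq> hleaves k \<Delta> (Suc m)"
  shows "card (Tset k \<Delta> (Suc m) \<eta>) = card (Tgt k \<Delta> m \<eta> True)"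
proof -
  show ?thesis using bij_betw_same_card[OF bij[OF assms, of True]] by (simp add: Tset_def)
qed

lemma card_S_Suc:
  assumes "\<eta> \<subseteq> hleaves k \<Delta> (Suc m)"
  shows "card (Sset k \<Delta> (Suc m) \<eta>) = card (Tgt k \<Delta> m \<eta> True) + card (Tgt k \<Delta> m \<eta> False)"
proof -
  let ?A = "{I. hindep k \<Delta> (Suc m) I \<and> ([] \<in> I) = True \<and> I \<inter> hleaves k \<Delta> (Suc m) = \<eta>}"
  let ?B = "{I. hindep k \<Delta> (Suc m) I \<and> ([] \<in> I) = False \<and> I \<inter> hleaves k \<Delta> (Suc m) = \<eta>}"
  have eq: "Sset k \<Delta> (Suc m) \<eta> = ?A \<union> ?B" by (auto simp: Sset_def)
  have fin: "finite ?A" "finite ?B"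
    by (rule finite_subset[OF _ finite_Sset[of k \<Delta> "Suc m" \<eta>]], auto simp: Sset_def)+
  have "card (Sset k \<Delta> (Suc m) \<eta>) = card ?A + card ?B"
    unfolding eq by (rule card_Un_disjoint[OF fin]) auto
  then show ?thesis
    using bij_betw_same_card[OF bij[OF assms, of True]] bij_betw_same_card[OF bij[OF assms, of False]]
    by simp
qed

definition Gf :: "nat \<Rightarrow> nat \<Rightarrow> (nat \<Rightarrow> nat \<Rightarrow> real) \<Rightarrow> real" where
  "Gf k \<Delta> x = (\<Prod>a<\<Delta>-1. 1 - (\<Prod>b<k-1. x a b)) / (1 + (\<Prod>a<\<Delta>-1. 1 - (\<Prod>b<k-1. x a b)))"

lemma hcond_Suc:
  assumes eta: "\<eta> \<subseteq> hleaves k \<Delta> (Suc m)"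
  shows "hcond k \<Delta> (Suc m) \<eta> = Gf k \<Delta> (\<lambda>a b. hcond k \<Delta> m (ch (a,b) \<eta>))"
proof -
  define S where "S a b = real (card (Sset k \<Delta> m (ch (a,b) \<eta>)))" for a b
  define T where "T a b = real (card (Tset k \<Delta> m (ch (a,b) \<eta>)))" for a b
  have Spos: "S a b > 0" if "a < \<Delta>-1" "b < k-1" for a b
    unfolding S_def using Sset_pos[OF ch_leaves[OF eta]] by simp
  have TS: "0 \<le> T a b \<and> T a b \<le> S a b" for a b
    unfolding S_def T_def using card_T_le by simp
  define P where "P a = (\<Prod>b<k-1. S a b)" for a
  have Ppos: "P a > 0" if "a < \<Delta>-1" for a unfolding P_def using Spos that by (auto intro!: prod_pos)
  define Q where "Q = (\<Prod>a<\<Delta>-1. P a)"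
  have Qpos: "Q > 0" unfolding Q_def using Ppos by (auto intro!: prod_pos)
  define R where "R = (\<Prod>a<\<Delta>-1. 1 - (\<Prod>b<k-1. T a b / S a b))"
  have x: "hcond k \<Delta> m (ch (a,b) \<eta>) = T a b / S a b" for a b
    unfolding hcond_eq S_def T_def ..
  have cT: "real (card (Tgt k \<Delta> m \<eta> True)) = (\<Prod>a<\<Delta>-1. P a - (\<Prod>b<k-1. T a b))"
  proof -
    have le: "(\<Prod>b<k-1. card (Tset k \<Delta> m (ch (a,b) \<eta>))) \<le> (\<Prod>b<k-1. card (Sset k \<Delta> m (ch (a,b) \<eta>)))" for a
      by (rule prod_mono) (simp add: card_T_le)
    have "real ((\<Prod>b<k-1. card (Sset k \<Delta> m (ch (a,b) \<eta>))) - (\<Prod>b<k-1. card (Tset k \<Delta> m (ch (a,b) \<eta>))))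
      = P a - (\<Prod>b<k-1. T a b)" for a
      unfolding of_nat_diff[OF le] P_def S_def T_def of_nat_prod ..
    then show ?thesis unfolding card_Tgt_True of_nat_prod by simp
  qed
  have cF: "real (card (Tgt k \<Delta> m \<eta> False)) = Q"
    unfolding card_Tgt_False Q_def P_def S_def by simp
  have TR: "(\<Prod>a<\<Delta>-1. P a - (\<Prod>b<k-1. T a b)) = Q * R"
  proof -
    have "P a - (\<Prod>b<k-1. T a b) = P a * (1 - (\<Prod>b<k-1. T a b / S a b))" if "a < \<Delta>-1" for a
    proof -
      have "(\<Prod>b<k-1. T a b / S a b) = (\<Prod>b<k-1. T a b) / P a"
        unfolding P_def by (simp add: prod_dividef)
      then show ?thesis using Ppos[OF that] by (simp add: field_simps)
    qed
    then have "(\<Prod>a<\<Delta>-1. P a - (\<Prod>b<k-1. T a b)) = (\<Prod>a<\<Delta>-1. P a * (1 - (\<Prod>b<k-1. T a b / S a b)))"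
      by (intro prod.cong) auto
    then show ?thesis unfolding Q_def R_def by (simp add: prod.distrib)
  qed
  have "hcond k \<Delta> (Suc m) \<eta> = (Q * R) / (Q * R + Q)"
    unfolding hcond_eq card_T_Suc[OF eta] card_S_Suc[OF eta] of_nat_add cT cF TR ..
  also have "\<dots> = R / (1 + R)"
  proof -
    have q: "0 \<le> T a b / S a b \<and> T a b / S a b \<le> 1" for a b
      using TS[of a b] by (auto simp: divide_le_eq_1 intro: divide_nonneg_nonneg)
    have "R \<ge> 0" unfolding R_def
      by (rule prod_nonneg) (use q in \<open>auto intro!: prod_le_1\<close>)
    then have "Q * R + Q = Q * (1 + R)" "1 + R > 0" by (auto simp: algebra_simps)
    then show ?thesis using Qpos by simp
  qed
  also have "\<dots> = Gf k \<Delta> (\<lambda>a b. hcond k \<Delta> m (ch (a,b) \<eta>))"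
    unfolding Gf_def x R_def ..
  finally show ?thesis .
qed


lemma Gf_anti:
  assumes "\<And>a b. a < \<Delta>-1 \<Longrightarrow> b < k-1 \<Longrightarrow> 0 \<le> x a b \<and> x a b \<le> y a b \<and> y a b \<le> 1"
  shows "Gf k \<Delta> y \<le> Gf k \<Delta> x"
proof -
  define Rx where "Rx = (\<Prod>a<\<Delta>-1. 1 - (\<Prod>b<k-1. x a b))"
  define Ry where "Ry = (\<Prod>a<\<Delta>-1. 1 - (\<Prod>b<k-1. y a b))"
  have f: "0 \<le> 1 - (\<Prod>b<k-1. y a b) \<and> 1 - (\<Prod>b<k-1. y a b) \<le> 1 - (\<Prod>b<k-1. x a b)" if "a < \<Delta>-1" for a
  proof -
    have "(\<Prod>b<k-1. x a b) \<le> (\<Prod>b<k-1. y a b)" by (rule prod_mono) (use assms that in auto)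
    moreover have "(\<Prod>b<k-1. y a b) \<le> 1" by (rule prod_le_1) (use assms that in force)
    ultimately show ?thesis by simp
  qed
  have "Ry \<le> Rx" unfolding Rx_def Ry_def by (rule prod_mono) (use f in auto)
  moreover have "0 \<le> Ry" unfolding Ry_def by (rule prod_nonneg) (use f in auto)
  ultimately have "Ry / (1 + Ry) \<le> Rx / (1 + Rx)"
    by (simp add: divide_simps) (simp add: algebra_simps)
  then show ?thesis unfolding Gf_def Rx_def Ry_def .
qed

lemma Gf_const1: "\<Delta> \<ge> 2 \<Longrightarrow> Gf k \<Delta> (\<lambda>a b. 1) = 0"
proof -
  assume "\<Delta> \<ge> 2"
  then have "0 \<in> {..<\<Delta>-1}" by simp
  then have "(\<Prod>a<\<Delta>-1. 1 - (\<Prod>b<k-1. (1::real))) = 0"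
    by (simp add: prod_zero_iff)
  then show ?thesis unfolding Gf_def by simp
qed

lemma ch_hleaves: "a < \<Delta>-1 \<Longrightarrow> b < k-1 \<Longrightarrow> ch (a,b) (hleaves k \<Delta> (Suc m)) = hleaves k \<Delta> m"
  by (auto simp: ch_def hleaves_Suc)

lemma ch_empty: "ch c {} = {}" by (simp add: ch_def)

lemma hcond_Suc_L: "hcond k \<Delta> (Suc m) (hleaves k \<Delta> (Suc m)) = Gf k \<Delta> (\<lambda>a b. hcond k \<Delta> m (hleaves k \<Delta> m))"
proof -
  have "hcond k \<Delta> (Suc m) (hleaves k \<Delta> (Suc m)) = Gf k \<Delta> (\<lambda>a b. hcond k \<Delta> m (ch (a,b) (hleaves k \<Delta> (Suc m))))"
    by (rule hcond_Suc) simp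
  also have "\<dots> = Gf k \<Delta> (\<lambda>a b. hcond k \<Delta> m (hleaves k \<Delta> m))"
    unfolding Gf_def by (intro arg_cong2[where f="(/)"] prod.cong refl arg_cong2[where f="(+)"]
        arg_cong2[where f="(-)"]) (auto simp: ch_hleaves)
  finally show ?thesis .
qed

lemma hcond_Suc_E: "hcond k \<Delta> (Suc m) {} = Gf k \<Delta> (\<lambda>a b. hcond k \<Delta> m {})"
  using hcond_Suc[of "{}" k \<Delta> m] by (simp add: ch_empty)

lemma hleaves_0: "hleaves k \<Delta> 0 = {[]}" by (auto simp: hleaves_def hvert_def)

lemma hcond_0L: "hcond k \<Delta> 0 {[]} = 1"
proof -
  have "Tset k \<Delta> 0 {[]} = Sset k \<Delta> 0 {[]}" by (auto simp: Tset_def Sset_def hleaves_0)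
  moreover have "card (Sset k \<Delta> 0 {[]}) > 0" using Sset_pos[of "{[]}" k \<Delta> 0] hleaves_0 by simp
  ultimately show ?thesis unfolding hcond_eq by simp
qed

lemma hcond_0E: "hcond k \<Delta> 0 {} = 0"
proof -
  have "Tset k \<Delta> 0 {} = {}" by (auto simp: Tset_def hleaves_0)
  then show ?thesis unfolding hcond_eq by simp
qed

lemma between:
  assumes "\<eta> \<subseteq> hleaves k \<Delta> m"
  shows "min (hcond k \<Delta> m (hleaves k \<Delta> m)) (hcond k \<Delta> m {}) \<le> hcond k \<Delta> m \<eta>
       \<and> hcond k \<Delta> m \<eta> \<le> max (hcond k \<Delta> m (hleaves k \<Delta> m)) (hcond k \<Delta> m {})"
  using assms
proof (induction m arbitrary: \<eta>)
  case 0
  then have "\<eta> = {} \<or> \<eta> = hleaves k \<Delta> 0" by (auto simp: hleaves_0)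
  then show ?case by auto
next
  case (Suc m)
  let ?lo = "min (hcond k \<Delta> m (hleaves k \<Delta> m)) (hcond k \<Delta> m {})"
  let ?hi = "max (hcond k \<Delta> m (hleaves k \<Delta> m)) (hcond k \<Delta> m {})"
  have x: "?lo \<le> hcond k \<Delta> m (ch (a,b) \<eta>) \<and> hcond k \<Delta> m (ch (a,b) \<eta>) \<le> ?hi" for a b
    using Suc.IH[OF ch_leaves[OF Suc.prems]] .
  have lo0: "0 \<le> ?lo" and hi1: "?hi \<le> 1" using hcond_01 by auto
  have "Gf k \<Delta> (\<lambda>a b. ?hi) \<le> Gf k \<Delta> (\<lambda>a b. hcond k \<Delta> m (ch (a,b) \<eta>))"
    by (rule Gf_anti) (use x lo0 hi1 hcond_01 in \<open>auto intro: order_trans\<close>)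
  moreover have "Gf k \<Delta> (\<lambda>a b. hcond k \<Delta> m (ch (a,b) \<eta>)) \<le> Gf k \<Delta> (\<lambda>a b. ?lo)"
    by (rule Gf_anti) (use x lo0 hi1 hcond_01 in \<open>auto intro: order_trans\<close>)
  moreover have "Gf k \<Delta> (\<lambda>a b. ?hi) \<ge> min (hcond k \<Delta> (Suc m) (hleaves k \<Delta> (Suc m))) (hcond k \<Delta> (Suc m) {})"
    unfolding hcond_Suc_L hcond_Suc_E by (cases "hcond k \<Delta> m (hleaves k \<Delta> m) \<le> hcond k \<Delta> m {}") (auto simp: max_def)
  moreover have "Gf k \<Delta> (\<lambda>a b. ?lo) \<le> max (hcond k \<Delta> (Suc m) (hleaves k \<Delta> (Suc m))) (hcond k \<Delta> (Suc m) {})"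
    unfolding hcond_Suc_L hcond_Suc_E by (cases "hcond k \<Delta> m (hleaves k \<Delta> m) \<le> hcond k \<Delta> m {}") (auto simp: min_def)
  ultimately show ?case using hcond_Suc[OF Suc.prems] by linarith
qed

lemma hp_Suc: "\<Delta> \<ge> 2 \<Longrightarrow> hp k \<Delta> (Suc n) = hcond k \<Delta> n {}"
proof (induction n)
  case 0
  show ?case unfolding hp_def hcond_Suc_L hleaves_0 hcond_0L hcond_0E using Gf_const1[OF 0] .
next
  case (Suc n)
  then show ?case unfolding hp_def hcond_Suc_L hcond_Suc_E[of k \<Delta> n] by (simp add: hp_def)
qed

lemma Max_eq:
  "Max {\<bar>hcond k \<Delta> n \<eta> - hcond k \<Delta> n \<eta>'\<bar> | \<eta> \<eta>'. \<eta> \<subseteq> hleaves k \<Delta> n \<and> \<eta>' \<subseteq> hleaves k \<Delta> n}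
   = \<bar>hcond k \<Delta> n (hleaves k \<Delta> n) - hcond k \<Delta> n {}\<bar>"
proof (rule Max_eqI)
  have "{\<bar>hcond k \<Delta> n \<eta> - hcond k \<Delta> n \<eta>'\<bar> | \<eta> \<eta>'. \<eta> \<subseteq> hleaves k \<Delta> n \<and> \<eta>' \<subseteq> hleaves k \<Delta> n}
     = (\<lambda>(\<eta>,\<eta>'). \<bar>hcond k \<Delta> n \<eta> - hcond k \<Delta> n \<eta>'\<bar>) ` (Pow (hleaves k \<Delta> n) \<times> Pow (hleaves k \<Delta> n))"
    by auto
  moreover have "finite (hleaves k \<Delta> n)" using finite_subset[OF hleaves_sub finite_hvert] .
  ultimately show "finite {\<bar>hcond k \<Delta> n \<eta> - hcond k \<Delta> n \<eta>'\<bar> | \<eta> \<eta>'. \<eta> \<subseteq> hleaves k \<Delta> n \<and> \<eta>' \<subseteq> hleaves k \<Delta> n}"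
    by simp
next
  fix y assume "y \<in> {\<bar>hcond k \<Delta> n \<eta> - hcond k \<Delta> n \<eta>'\<bar> | \<eta> \<eta>'. \<eta> \<subseteq> hleaves k \<Delta> n \<and> \<eta>' \<subseteq> hleaves k \<Delta> n}"
  then obtain \<eta> \<eta>' where y: "y = \<bar>hcond k \<Delta> n \<eta> - hcond k \<Delta> n \<eta>'\<bar>" "\<eta> \<subseteq> hleaves k \<Delta> n" "\<eta>' \<subseteq> hleaves k \<Delta> n"
    by blast
  from between[OF y(2)] between[OF y(3)] show "y \<le> \<bar>hcond k \<Delta> n (hleaves k \<Delta> n) - hcond k \<Delta> n {}\<bar>"
    unfolding y(1) by (auto simp: min_def max_def split: if_splits)
next
  show "\<bar>hcond k \<Delta> n (hleaves k \<Delta> n) - hcond k \<Delta> n {}\<bar>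
     \<in> {\<bar>hcond k \<Delta> n \<eta> - hcond k \<Delta> n \<eta>'\<bar> | \<eta> \<eta>'. \<eta> \<subseteq> hleaves k \<Delta> n \<and> \<eta>' \<subseteq> hleaves k \<Delta> n}"
    by blast
qed

theorem lemma55:
  fixes k \<Delta> :: nat
  assumes "k \<ge> 2" and "\<Delta> \<ge> 2"
  shows "huniqueness k \<Delta> \<longleftrightarrow> limsup (\<lambda>n. ereal \<bar>hp k \<Delta> (n + 1) - hp k \<Delta> n\<bar>) = 0"
proof -
  have "(\<lambda>n. ereal (Max {\<bar>hcond k \<Delta> n \<eta> - hcond k \<Delta> n \<eta>'\<bar> | \<eta> \<eta>'.
        \<eta> \<subseteq> hleaves k \<Delta> n \<and> \<eta>' \<subseteq> hleaves k \<Delta> n})) = (\<lambda>n. ereal \<bar>hp k \<Delta> (n + 1) - hp k \<Delta> n\<bar>)"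
  proof (rule ext)
    fix n
    show "ereal (Max {\<bar>hcond k \<Delta> n \<eta> - hcond k \<Delta> n \<eta>'\<bar> | \<eta> \<eta>'.
        \<eta> \<subseteq> hleaves k \<Delta> n \<and> \<eta>' \<subseteq> hleaves k \<Delta> n}) = ereal \<bar>hp k \<Delta> (n + 1) - hp k \<Delta> n\<bar>"
      unfolding Max_eq using hp_Suc[OF assms(2), of k n] by (simp add: hp_def abs_minus_commute)
  qed
  then show ?thesis unfolding huniqueness_def by simp
qed

end
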